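(* Let $A\in\mathbb{R}^{n\times d}$ with largest singular value $\sigma_1$, $S\in\mathbb{R}^{d\times m}$, $\lambda>0$, and let $f:\mathbb{R}^n\to\mathbb{R}$ be convex, differentiable and $L$-Lipschitz (its gradient is not assumed Lipschitz). Let $x^*$ be the unique minimizer of $x\mapsto f(Ax)+\frac{\lambda}{2}\|x\|_2^2$, let $\alpha^*$ be any minimizer of $\alpha\mapsto f(AS\alpha)+\frac{\lambda}{2}\|S\alpha\|_2^2$, and set $\widetilde{x}=-\frac{1}{\lambda}A^\top\nabla f(AS\alpha^* )$. Then $$\|\widetilde{x}-x^*\|_2\le\frac{6L}{\lambda}\sqrt{\sigma_1 Z_f}.$$
   Context: $f^*(z)=\sup_w\{w^\top z-f(w)\}$ is the Fenchel conjugate of $f$ with domain $\mathrm{dom} f^*$. $z^*=\nabla f(Ax^* )$. $P_S=S(S^\top S)^\dagger S^\top$, $P_S^\perp=I_d-P_S$, and $Z_f=Z_f(A,S)=\sup_{\Delta\in(\mathrm{dom} f^*-z^* ),\,\Delta\ne0}\left(\frac{\Delta^\top AP_S^\perp A^\top\Delta}{\|\Delta\|_2^2}\right)^{1/2}$. *)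

theory Defs
  imports "HOL-Analysis.Analysis"
begin

definition fenchel_dom :: "('a::real_inner \<Rightarrow> real) \<Rightarrow> 'a set" where
  "fenchel_dom f = {z. bdd_above (range (\<lambda>w. inner w z - f w))}"

definition pinv :: "real^'n^'m \<Rightarrow> real^'m^'n" where
  "pinv M = (THE X. M ** X ** M = M \<and> X ** M ** X = X \<and>
      transpose (M ** X) = M ** X \<and> transpose (X ** M) = X ** M)"

definition proj_mat :: "real^'m^'d \<Rightarrow> real^'d^'d" where
  "proj_mat S = S ** pinv (transpose S ** S) ** transpose S"

definition proj_perp :: "real^'m^'d \<Rightarrow> real^'d^'d" where
  "proj_perp S = mat 1 - proj_mat S"

text \<open>Z_f(A,S); the supremum over an empty index set is taken to be 0
  (all values are nonnegative, so inserting 0 does not change a nonempty sup).\<close>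
definition Zf :: "(real^'n \<Rightarrow> real) \<Rightarrow> real^'n \<Rightarrow> real^'d^'n \<Rightarrow> real^'m^'d \<Rightarrow> real" where
  "Zf f zs A S = Sup (insert 0
     ((\<lambda>\<Delta>. sqrt ((transpose A *v \<Delta>) \<bullet> (proj_perp S *v (transpose A *v \<Delta>)) / (norm \<Delta>)^2))
       ` {\<Delta>. \<Delta> \<in> (\<lambda>z. z - zs) ` fenchel_dom f \<and> \<Delta> \<noteq> 0}))"

end

theory Submission
  imports Defs
begin


lemma grad_ineq:
  fixes f :: "'a::real_inner \<Rightarrow> real"
  assumes cv: "convex_on UNIV f" and d: "(f has_derivative (\<lambda>h. g \<bullet> h)) (at a)"
  shows "f a + g \<bullet> (b - a) \<le> f b"
proof -
  define \<phi> where "\<phi> = (\<lambda>t::real. f (a + t *\<^sub>R (b - a)))"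
  have cvp: "convex_on UNIV \<phi>"
  proof (rule convex_onI)
    show "convex (UNIV::real set)" by simp
  next
    fix t x y :: real assume t: "0 < t" "t < 1"
    have "\<phi> ((1 - t) * x + t * y) = f ((1 - t) *\<^sub>R (a + x *\<^sub>R (b - a)) + t *\<^sub>R (a + y *\<^sub>R (b - a)))"
      unfolding \<phi>_def by (simp add: algebra_simps)
    also have "\<dots> \<le> (1 - t) * f (a + x *\<^sub>R (b - a)) + t * f (a + y *\<^sub>R (b - a))"
      using cv t by (intro convex_onD) auto
    finally show "\<phi> ((1 - t) *\<^sub>R x + t *\<^sub>R y) \<le> (1 - t) * \<phi> x + t * \<phi> y" unfolding \<phi>_def by simp
  qed
  have d1: "((\<lambda>t::real. a + t *\<^sub>R (b - a)) has_derivative (\<lambda>t. t *\<^sub>R (b - a))) (at 0)"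
    by (auto intro!: derivative_eq_intros)
  have d2: "(f has_derivative (\<lambda>h. g \<bullet> h)) (at (a + 0 *\<^sub>R (b - a)))" using d by simp
  have "(\<phi> has_derivative (\<lambda>t. g \<bullet> (t *\<^sub>R (b - a)))) (at 0)"
    unfolding \<phi>_def using has_derivative_compose[OF d1 d2] by simp
  moreover have "(\<lambda>t. g \<bullet> (t *\<^sub>R (b - a))) = (*) (g \<bullet> (b - a))" by (auto simp: mult.commute)
  ultimately have "(\<phi> has_field_derivative (g \<bullet> (b - a))) (at 0 within UNIV)"
    by (simp add: has_field_derivative_def)
  from convex_on_imp_above_tangent[OF cvp _ _ _ this, of 1]
  have "\<phi> 1 - \<phi> 0 \<ge> g \<bullet> (b - a) * (1 - 0)" by auto
  then show ?thesis unfolding \<phi>_def by simp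
qed

lemma grad_bound:
  fixes f :: "'a::real_inner \<Rightarrow> real"
  assumes cv: "convex_on UNIV f" and d: "(f has_derivative (\<lambda>h. g \<bullet> h)) (at a)"
    and lip: "L-lipschitz_on UNIV f"
  shows "norm g \<le> L"
proof -
  have "f a + g \<bullet> g \<le> f (a + g)" using grad_ineq[OF cv d, of "a + g"] by simp
  moreover have "dist (f (a + g)) (f a) \<le> L * dist (a + g) a" using lip by (auto simp: lipschitz_on_def)
  ultimately have "norm g ^ 2 \<le> L * norm g"
    by (auto simp: dist_real_def dist_norm power2_norm_eq_inner)
  moreover have "L \<ge> 0" using lip by (auto simp: lipschitz_on_def)
  ultimately show ?thesis
    by (metis mult_right_le_imp_le norm_ge_zero order_le_less power2_eq_square zero_less_norm_iff order.trans)
qed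

lemma grad_dom:
  fixes f :: "'a::real_inner \<Rightarrow> real"
  assumes cv: "convex_on UNIV f" and d: "(f has_derivative (\<lambda>h. g \<bullet> h)) (at a)"
  shows "g \<in> fenchel_dom f"
  unfolding fenchel_dom_def
proof (intro CollectI bdd_aboveI2)
  fix w
  have "f a + g \<bullet> (w - a) \<le> f w" by (rule grad_ineq[OF cv d])
  then show "w \<bullet> g - f w \<le> a \<bullet> g - f a" by (simp add: inner_diff_right inner_commute)
qed

lemma transpose_norm:
  fixes A :: "real^'d^'n"
  shows "norm (transpose A *v z) \<le> onorm (\<lambda>x. A *v x) * norm z"
proof -
  let ?y = "transpose A *v z"
  have "norm ?y ^ 2 = z \<bullet> (A *v ?y)"
    by (simp add: power2_norm_eq_inner dot_lmul_matrix)
  also have "\<dots> \<le> norm z * norm (A *v ?y)" by (rule Cauchy_Schwarz_ineq2[THEN abs_le_D1])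
  also have "\<dots> \<le> norm z * (onorm (\<lambda>x. A *v x) * norm ?y)"
    by (intro mult_left_mono onorm) auto
  finally have "norm ?y * norm ?y \<le> (onorm (\<lambda>x. A *v x) * norm z) * norm ?y"
    by (simp add: power2_eq_square algebra_simps)
  then show ?thesis
    by (cases "norm ?y = 0") (auto simp: onorm_pos_le mult_le_cancel_right)
qed



definition penrose :: "real^'n^'m \<Rightarrow> real^'m^'n \<Rightarrow> bool" where
  "penrose M X \<longleftrightarrow> M ** X ** M = M \<and> X ** M ** X = X \<and>
      transpose (M ** X) = M ** X \<and> transpose (X ** M) = X ** M"

lemma penrose_unique:
  assumes "penrose M X" "penrose M Y" shows "X = Y"
proof -
  from assms have a1: "M ** X ** M = M" and a2: "X ** M ** X = X" and a3: "transpose (M ** X) = M ** X"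
    and a4: "transpose (X ** M) = X ** M" and b1: "M ** Y ** M = M" and b2: "Y ** M ** Y = Y"
    and b3: "transpose (M ** Y) = M ** Y" and b4: "transpose (Y ** M) = Y ** M"
    by (auto simp: penrose_def)
  have tM1: "transpose M = transpose M ** (M ** Y)"
  proof -
    have "transpose M = transpose (M ** Y ** M)" using b1 by simp
    also have "\<dots> = transpose M ** transpose (M ** Y)" by (rule matrix_transpose_mul)
    finally show ?thesis using b3 by simp
  qed
  have tM2: "transpose M = X ** M ** transpose M"
  proof -
    have "transpose M = transpose (M ** (X ** M))" using a1 by (simp add: matrix_mul_assoc)
    also have "\<dots> = transpose (X ** M) ** transpose M" by (rule matrix_transpose_mul)
    finally show ?thesis using a4 by simp
  qed
  have "X = X ** (M ** X)" using a2 by (simp add: matrix_mul_assoc)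
  also have "\<dots> = X ** transpose (M ** X)" using a3 by simp
  also have "\<dots> = X ** (transpose X ** transpose M)" by (simp only: matrix_transpose_mul)
  also have "\<dots> = X ** (transpose X ** (transpose M ** (M ** Y)))" using tM1 by simp
  also have "\<dots> = X ** (transpose X ** transpose M) ** M ** Y" by (simp add: matrix_mul_assoc)
  also have "transpose X ** transpose M = transpose (M ** X)" by (simp only: matrix_transpose_mul)
  also have "X ** transpose (M ** X) ** M ** Y = X ** M ** X ** M ** Y" using a3 by (simp add: matrix_mul_assoc)
  also have "\<dots> = X ** M ** Y" using a2 by simp
  finally have x: "X = X ** M ** Y" .
  have "Y = (Y ** M) ** Y" using b2 by simp
  also have "\<dots> = transpose (Y ** M) ** Y" using b4 by simp
  also have "\<dots> = transpose M ** transpose Y ** Y" by (simp only: matrix_transpose_mul)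
  also have "\<dots> = X ** M ** transpose M ** transpose Y ** Y" using tM2 by simp
  also have "\<dots> = X ** M ** (transpose M ** transpose Y) ** Y" by (simp add: matrix_mul_assoc)
  also have "transpose M ** transpose Y = transpose (Y ** M)" by (simp only: matrix_transpose_mul)
  also have "X ** M ** transpose (Y ** M) ** Y = X ** M ** (Y ** M ** Y)" using b4 by (simp add: matrix_mul_assoc)
  also have "\<dots> = X ** M ** Y" using b2 by simp
  finally show ?thesis using x by simp
qed

lemma lin_term: fixes c :: "'b::real_vector" shows "linear (\<lambda>y. (b \<bullet> y) *\<^sub>R c)"
  by (rule linearI) (simp_all add: inner_add_right scaleR_add_left)

lemma lin_sum: fixes c :: "'a::real_inner \<Rightarrow> 'b::real_vector"
  shows "linear (\<lambda>y. \<Sum>b\<in>B. (b \<bullet> y) *\<^sub>R c b)"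
  by (intro linear_compose_sum ballI lin_term)

lemma sym_from_inner:
  fixes K :: "real^'n^'n"
  assumes "\<And>x y. (K *v x) \<bullet> y = x \<bullet> (K *v y)"
  shows "transpose K = K"
proof -
  have "transpose K *v x = K *v x" for x
  proof -
    have "(x v* K) \<bullet> y = (K *v x) \<bullet> y" for y using assms dot_lmul_matrix by metis
    then have "(x v* K - K *v x) \<bullet> (x v* K - K *v x) = 0" by (simp add: inner_diff_left)
    then show ?thesis by simp
  qed
  then show ?thesis by (simp add: matrix_eq)
qed

lemma penrose_exists_sym:
  fixes M :: "real^'n^'n"
  assumes symM: "transpose M = M"
  shows "\<exists>X. penrose M X"
proof -
  have Msym: "(M *v x) \<bullet> y = x \<bullet> (M *v y)" for x y
    by (metis dot_lmul_matrix symM transpose_matrix_vector)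
  define V where "V = range (\<lambda>x. M *v x)"
  have subV: "subspace V" unfolding V_def
    by (rule linear_subspace_image) (auto intro: subspace_UNIV)
  obtain B where BV: "B \<subseteq> V" and orth: "pairwise orthogonal B"
    and n1: "\<And>x. x \<in> B \<Longrightarrow> norm x = 1" and ind: "independent B" and spB: "span B = V"
    using orthonormal_basis_subspace[OF subV] by metis
  have finB: "finite B" using ind independent_imp_finite by blast
  have bb: "b \<bullet> b' = (if b = b' then 1 else 0)" if "b \<in> B" "b' \<in> B" for b b'
    using orth n1 that by (auto simp: pairwise_def orthogonal_def norm_eq_1)
  define p where "p y = (\<Sum>b\<in>B. (b \<bullet> y) *\<^sub>R b)" for y :: "real^'n"
  have pV: "p y \<in> V" for y
    unfolding p_def spB[symmetric] by (intro span_sum span_mul span_base) auto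
  have pb: "b \<bullet> p y = b \<bullet> y" if "b \<in> B" for b y
  proof -
    have "b \<bullet> p y = (\<Sum>b'\<in>B. (b' \<bullet> y) * (b \<bullet> b'))" unfolding p_def by (simp add: inner_sum_right)
    also have "\<dots> = (\<Sum>b'\<in>B. if b' = b then b \<bullet> y else 0)"
      by (intro sum.cong refl) (auto simp: bb that inner_commute)
    also have "\<dots> = b \<bullet> y" using finB that by simp
    finally show ?thesis .
  qed
  have porth: "x \<bullet> (y - p y) = 0" if "x \<in> V" for x y
  proof -
    have "x \<in> span B" using that spB by simp
    moreover have "subspace {x. x \<bullet> (y - p y) = 0}"
      by (auto simp: subspace_def inner_add_left)
    moreover have "b \<bullet> (y - p y) = 0" if "b \<in> B" for b
      using that by (simp add: inner_diff_right pb)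
    ultimately show ?thesis using span_induct[of x B "\<lambda>x. x \<bullet> (y - p y) = 0"] by blast
  qed
  have pid: "p v = v" if "v \<in> V" for v
  proof -
    have "v - p v \<in> V" using that pV subV by (simp add: subspace_diff)
    from porth[OF this, of v] show ?thesis by simp
  qed
  have psym: "p x \<bullet> y = x \<bullet> p y" for x y
    unfolding p_def by (simp add: inner_sum_left inner_sum_right inner_commute mult.commute)
  have MV: "M *v x \<in> V" for x unfolding V_def by simp
  have Mp: "M *v p y = M *v y" for y
  proof -
    have "(M *v (y - p y)) \<bullet> (M *v (y - p y)) = 0"
      using Msym porth[OF MV] by (metis inner_commute)
    then show ?thesis by (simp add: matrix_vector_mult_diff_distrib)
  qed
  have VkerM: "x = 0" if xV: "x \<in> V" and xM: "M *v x = 0" for x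
  proof -
    obtain z where z: "x = M *v z" using xV unfolding V_def by blast
    have "x \<bullet> x = z \<bullet> (M *v x)" using Msym z by metis
    then show ?thesis using xM by simp
  qed
  define c where "c b = p (SOME z. M *v z = b)" for b
  have cV: "c b \<in> V" for b unfolding c_def by (rule pV)
  have Mc: "M *v c b = b" if "b \<in> B" for b
  proof -
    have "\<exists>z. M *v z = b" using that BV unfolding V_def by auto
    then have "M *v (SOME z. M *v z = b) = b" by (rule someI_ex)
    then show ?thesis unfolding c_def by (simp add: Mp)
  qed
  define q where "q y = (\<Sum>b\<in>B. (b \<bullet> y) *\<^sub>R c b)" for y :: "real^'n"
  have qV: "q y \<in> V" for y
    unfolding q_def using subV cV by (intro subspace_sum subspace_scale) auto
  have Mq: "M *v q y = p y" for y
    unfolding q_def p_def by (simp add: vec.sum matrix_vector_mult_scaleR Mc)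
  have qM: "q (M *v x) = p x" for x
  proof (rule eq_iff_diff_eq_0[THEN iffD2], rule VkerM)
    show "q (M *v x) - p x \<in> V" using qV pV subV by (simp add: subspace_diff)
    show "M *v (q (M *v x) - p x) = 0" by (simp add: matrix_vector_mult_diff_distrib Mq Mp pid MV)
  qed
  have lq: "linear q" unfolding q_def[abs_def] by (rule lin_sum)
  have lp: "linear p" unfolding p_def[abs_def] by (rule lin_sum)
  have qp: "q (p y) = q y" for y unfolding q_def by (intro sum.cong refl) (simp add: pb)
  define X where "X = matrix q"
  have Xq: "X *v y = q y" for y unfolding X_def using lq by (simp add: matrix_works linear_matrix_vector_mul_eq)
  have "M ** X ** M = M"
    by (simp add: matrix_eq matrix_vector_mul_assoc[symmetric] Xq Mq pid MV)
  moreover have "X ** M ** X = X"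
    by (simp add: matrix_eq matrix_vector_mul_assoc[symmetric] Xq Mq qp)
  moreover have "transpose (M ** X) = M ** X"
    by (rule sym_from_inner) (simp add: matrix_vector_mul_assoc[symmetric] Xq Mq psym)
  moreover have "transpose (X ** M) = X ** M"
    by (rule sym_from_inner) (simp add: matrix_vector_mul_assoc[symmetric] Xq qM psym)
  ultimately show ?thesis unfolding penrose_def by blast
qed




lemma pinv_penrose:
  fixes M :: "real^'n^'n"
  assumes "transpose M = M" shows "penrose M (pinv M)"
proof -
  have "pinv M = (THE X. penrose M X)" by (simp add: pinv_def penrose_def)
  moreover have "\<exists>!X. penrose M X" using penrose_exists_sym[OF assms] penrose_unique by blast
  ultimately show ?thesis by (metis theI')
qed

lemma StS_key:
  fixes S :: "real^'m^'d"
  shows "transpose S ** S ** pinv (transpose S ** S) ** transpose S = transpose S"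
proof -
  define M where "M = transpose S ** S"
  define X where "X = pinv M"
  have sM: "transpose M = M" unfolding M_def by (simp add: matrix_transpose_mul)
  have MXM: "M ** X ** M = M" using pinv_penrose[OF sM] unfolding X_def penrose_def by blast
  have pX: "penrose M X" using pinv_penrose[OF sM] unfolding X_def .
  have pXT: "penrose M (transpose X)"
  proof -
    from pX have a1: "M ** X ** M = M" and a2: "X ** M ** X = X" and a3: "transpose (M ** X) = M ** X"
      and a4: "transpose (X ** M) = X ** M" by (auto simp: penrose_def)
    have "M ** transpose X ** M = transpose (M ** X ** M)" by (simp add: matrix_transpose_mul matrix_mul_assoc sM)
    then have 1: "M ** transpose X ** M = M" using a1 sM by simp
    have "transpose X ** M ** transpose X = transpose (X ** M ** X)" by (simp add: matrix_transpose_mul matrix_mul_assoc sM)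
    then have 2: "transpose X ** M ** transpose X = transpose X" using a2 by simp
    have e1: "M ** transpose X = X ** M" using a4 by (simp add: matrix_transpose_mul sM)
    have e2: "transpose X ** M = M ** X" using a3 by (simp add: matrix_transpose_mul sM)
    have 3: "transpose (M ** transpose X) = M ** transpose X" using e1 a4 by simp
    have 4: "transpose (transpose X ** M) = transpose X ** M" using e2 a3 by simp
    show ?thesis using 1 2 3 4 by (simp add: penrose_def)
  qed
  have XT: "transpose X = X" using penrose_unique[OF pXT pX] .
  have SXM: "S ** X ** M = S"
  proof (subst matrix_eq, intro allI)
    fix z
    define e where "e = X *v (M *v z) - z"
    have "M *v (X *v (M *v z)) = (M ** X ** M) *v z" by (simp add: matrix_vector_mul_assoc matrix_mul_assoc)
    then have Me: "M *v e = 0" unfolding e_def using MXM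
      by (simp add: matrix_vector_mult_diff_distrib)
    have "(S *v e) \<bullet> (S *v e) = ((S *v e) v* S) \<bullet> e" by (simp add: dot_lmul_matrix)
    also have "\<dots> = (transpose S *v (S *v e)) \<bullet> e" by simp
    also have "\<dots> = (M *v e) \<bullet> e" by (simp add: M_def matrix_vector_mul_assoc)
    finally have "(S *v e) \<bullet> (S *v e) = 0" using Me by simp
    then have "S *v e = 0" by simp
    then show "(S ** X ** M) *v z = S *v z"
      unfolding e_def by (simp add: matrix_vector_mult_diff_distrib matrix_vector_mul_assoc matrix_mul_assoc)
  qed
  have "M ** X ** transpose S = transpose (S ** X ** M)"
    by (simp add: matrix_transpose_mul matrix_mul_assoc sM XT)
  also have "\<dots> = transpose S" using SXM by simp
  finally show ?thesis unfolding M_def X_def .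
qed



lemma fermat_lin:
  fixes A :: "real^'d^'n" and T :: "real^'k^'d" and f :: "real^'n \<Rightarrow> real"
  assumes grad: "\<And>y. (f has_derivative (\<lambda>h. gradf y \<bullet> h)) (at y)"
    and mn: "\<And>b. f (A *v (T *v a)) + lam / 2 * (norm (T *v a))^2 \<le> f (A *v (T *v b)) + lam / 2 * (norm (T *v b))^2"
  shows "(transpose A *v gradf (A *v (T *v a)) + lam *\<^sub>R (T *v a)) \<bullet> (T *v h) = 0"
proof -
  let ?L = "\<lambda>x. A *v (T *v x)"
  have dL: "(?L has_derivative ?L) (at a)"
    using bounded_linear_imp_has_derivative[OF bounded_linear_compose[OF matrix_vector_mul_bounded_linear[of A] matrix_vector_mul_bounded_linear[of T]]] .
  have d1: "((\<lambda>x. f (?L x)) has_derivative (\<lambda>h. gradf (?L a) \<bullet> ?L h)) (at a)"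
    using has_derivative_compose[OF dL grad] .
  have dT: "((\<lambda>x. T *v x) has_derivative (\<lambda>x. T *v x)) (at a)" by (rule bounded_linear_imp_has_derivative) simp
  have d2: "((\<lambda>x. (norm (T *v x))^2) has_derivative (\<lambda>h. 2 *\<^sub>R ((T *v a) \<bullet> (T *v h)))) (at a)"
    using has_derivative_compose[OF dT has_derivative_sqnorm_at] .
  have d: "((\<lambda>x. f (?L x) + lam / 2 * (norm (T *v x))^2) has_derivative
      (\<lambda>h. gradf (?L a) \<bullet> ?L h + lam / 2 * (2 *\<^sub>R ((T *v a) \<bullet> (T *v h))))) (at a)"
    by (rule has_derivative_add[OF d1 has_derivative_mult_right[OF d2]])
  have "(\<lambda>h. gradf (?L a) \<bullet> ?L h + lam / 2 * (2 *\<^sub>R ((T *v a) \<bullet> (T *v h)))) = (\<lambda>v. 0)"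
    by (rule differential_zero_maxmin[OF UNIV_I open_UNIV d], rule disjI2, intro ballI mn)
  from fun_cong[OF this, of h]
  have "gradf (?L a) \<bullet> ?L h + lam / 2 * (2 *\<^sub>R ((T *v a) \<bullet> (T *v h))) = 0" by (simp only:)
  moreover have "gradf (?L a) \<bullet> ?L h = (transpose A *v gradf (?L a)) \<bullet> (T *v h)"
    by (simp add: dot_lmul_matrix)
  ultimately show ?thesis by (simp add: inner_add_left)
qed

lemma perp_eq: "proj_perp S *v w = w - S *v (pinv (transpose S ** S) *v (transpose S *v w))"
  by (simp add: proj_perp_def proj_mat_def matrix_vector_mult_diff_rdistrib matrix_vector_mul_assoc matrix_mul_assoc del: transpose_matrix_vector)

lemma perp_St: "transpose S *v (proj_perp S *v w) = 0"
proof -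
  have "transpose S *v (S *v (pinv (transpose S ** S) *v (transpose S *v w)))
     = (transpose S ** S ** pinv (transpose S ** S) ** transpose S) *v w"
    by (simp only: matrix_vector_mul_assoc matrix_mul_assoc)
  then show ?thesis by (simp add: perp_eq matrix_vector_mult_diff_distrib StS_key del: transpose_matrix_vector)
qed

lemma perp_orth: "(S *v y) \<bullet> (proj_perp S *v w) = 0"
proof -
  have "(S *v y) \<bullet> (proj_perp S *v w) = (y v* transpose S) \<bullet> (proj_perp S *v w)" by simp
  also have "\<dots> = y \<bullet> (transpose S *v (proj_perp S *v w))" unfolding dot_lmul_matrix ..
  finally show ?thesis using perp_St[of S w] by simp
qed

lemma perp_inner: "w \<bullet> (proj_perp S *v w) = (norm (proj_perp S *v w))^2"
  and perp_le: "norm (proj_perp S *v w) \<le> norm w"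
proof -
  define y where "y = pinv (transpose S ** S) *v (transpose S *v w)"
  have w: "w = S *v y + proj_perp S *v w" by (simp add: perp_eq y_def)
  have o: "(S *v y) \<bullet> (proj_perp S *v w) = 0" by (rule perp_orth)
  show "w \<bullet> (proj_perp S *v w) = (norm (proj_perp S *v w))^2"
    by (subst w) (simp add: inner_add_left o power2_norm_eq_inner)
  have "(norm w)^2 = (norm (S *v y))^2 + (norm (proj_perp S *v w))^2"
    by (subst w) (simp add: power2_norm_eq_inner inner_add_left inner_add_right o inner_commute)
  then show "norm (proj_perp S *v w) \<le> norm w"
    by (metis add_increasing zero_le_power2 le_add_same_cancel2 norm_ge_zero power2_le_imp_le order_refl)
qed



theorem theorem4:
  fixes A :: "real^'d^'n" and S :: "real^'m^'d" and lam L :: real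
    and f :: "real^'n \<Rightarrow> real" and gradf :: "real^'n \<Rightarrow> real^'n"
    and xs :: "real^'d" and as :: "real^'m"
  assumes lam_pos: "lam > 0"
    and convex: "convex_on UNIV f"
    and grad: "\<And>y. (f has_derivative (\<lambda>h. gradf y \<bullet> h)) (at y)"
    and lip: "L-lipschitz_on UNIV f"
    and xs_min: "\<And>x. f (A *v xs) + lam / 2 * (norm xs)^2 \<le> f (A *v x) + lam / 2 * (norm x)^2"
    and as_min: "\<And>\<alpha>. f (A *v (S *v as)) + lam / 2 * (norm (S *v as))^2
                   \<le> f (A *v (S *v \<alpha>)) + lam / 2 * (norm (S *v \<alpha>))^2"
  shows "norm ((- (1 / lam)) *\<^sub>R (transpose A *v gradf (A *v (S *v as))) - xs)
           \<le> 6 * L / lam * sqrt (onorm (\<lambda>x. A *v x) * Zf f (gradf (A *v xs)) A S)"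
proof -
  define \<sigma> where "\<sigma> = onorm (\<lambda>x. A *v x)"
  define z1 where "z1 = gradf (A *v (S *v as))"
  define z0 where "z0 = gradf (A *v xs)"
  define D where "D = z1 - z0"
  define u where "u = transpose A *v z1"
  define v where "v = transpose A *v z0"
  define w where "w = u - v"
  define xh where "xh = S *v as"
  define r where "r = u + lam *\<^sub>R xh"
  define Z where "Z = Zf f z0 A S"
  have L0: "L \<ge> 0" using lip by (auto simp: lipschitz_on_def)
  have s0: "\<sigma> \<ge> 0" unfolding \<sigma>_def by (intro onorm_pos_le) simp
  have wD: "w = transpose A *v D" unfolding w_def u_def v_def D_def by (simp add: matrix_vector_mult_diff_distrib)
  have nz1: "norm z1 \<le> L" unfolding z1_def by (rule grad_bound[OF convex grad lip])
  have nz0: "norm z0 \<le> L" unfolding z0_def by (rule grad_bound[OF convex grad lip])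
  have nD: "norm D \<le> 2 * L" unfolding D_def using norm_triangle_ineq4[of z1 z0] nz1 nz0 by linarith
  have opt0: "(v + lam *\<^sub>R xs) \<bullet> h = 0" for h
    using fermat_lin[of f gradf A "mat 1" xs lam h] grad xs_min unfolding v_def z0_def by simp
  have vxs: "v + lam *\<^sub>R xs = 0" using opt0[of "v + lam *\<^sub>R xs"] by simp
  have opt1: "r \<bullet> (S *v h) = 0" for h
    using fermat_lin[of f gradf A S as lam h] grad as_min unfolding r_def u_def z1_def xh_def by simp
  have m1: "f (A *v xh) + z1 \<bullet> (A *v xs - A *v xh) \<le> f (A *v xs)"
    unfolding z1_def xh_def by (rule grad_ineq[OF convex grad])
  have m2: "f (A *v xs) + z0 \<bullet> (A *v xh - A *v xs) \<le> f (A *v xh)"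
    unfolding z0_def by (rule grad_ineq[OF convex grad])
  have "D \<bullet> (A *v (xh - xs)) \<ge> 0"
    using m1 m2 unfolding D_def by (simp add: matrix_vector_mult_diff_distrib inner_diff_left inner_diff_right)
  then have "w \<bullet> (xh - xs) \<ge> 0" unfolding wD by (simp add: dot_lmul_matrix)
  moreover have "lam *\<^sub>R (xh - xs) = r - w" unfolding r_def w_def using vxs
    by (simp add: algebra_simps)
  ultimately have "w \<bullet> (r - w) \<ge> 0" using lam_pos
    by (metis inner_scaleR_right mult_nonneg_nonneg less_imp_le)
  then have ww: "w \<bullet> w \<le> w \<bullet> r" by (simp add: inner_diff_right)
  define Pw where "Pw = proj_perp S *v w"
  define y0 where "y0 = pinv (transpose S ** S) *v (transpose S *v w)"
  have wdec: "w = S *v y0 + Pw" unfolding Pw_def y0_def by (simp add: perp_eq)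
  have "w \<bullet> r = Pw \<bullet> r"
  proof -
    have "(S *v y0) \<bullet> r = 0" using opt1[of y0] by (simp add: inner_commute)
    then show ?thesis by (subst wdec) (simp add: inner_add_left)
  qed
  also have "\<dots> \<le> norm Pw * norm r" by (rule norm_cauchy_schwarz)
  finally have wr: "w \<bullet> r \<le> norm Pw * norm r" .
  have rxh: "r \<bullet> xh = 0" unfolding xh_def by (rule opt1)
  have ue: "u = r - lam *\<^sub>R xh" unfolding r_def by simp
  have "u \<bullet> u = r \<bullet> r + lam * lam * (xh \<bullet> xh)"
    unfolding ue by (simp add: inner_diff_left inner_diff_right rxh inner_commute[of xh r])
  moreover have "lam * lam * (xh \<bullet> xh) \<ge> 0" by simp
  ultimately have "(norm r)^2 \<le> (norm u)^2" by (simp add: power2_norm_eq_inner)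
  then have "norm r \<le> norm u" by (rule power2_le_imp_le) simp
  moreover have "norm u \<le> \<sigma> * norm z1" unfolding u_def \<sigma>_def by (rule transpose_norm)
  ultimately have nr: "norm r \<le> \<sigma> * L" using nz1 s0 by (meson mult_left_mono order_trans)
  define Q where "Q = (\<lambda>\<Delta>. sqrt ((transpose A *v \<Delta>) \<bullet> (proj_perp S *v (transpose A *v \<Delta>)) / (norm \<Delta>)^2))
       ` {\<Delta>. \<Delta> \<in> (\<lambda>z. z - z0) ` fenchel_dom f \<and> \<Delta> \<noteq> 0}"
  have Zdef: "Z = Sup (insert 0 Q)" unfolding Z_def Zf_def Q_def by simp
  have val: "sqrt ((transpose A *v \<Delta>) \<bullet> (proj_perp S *v (transpose A *v \<Delta>)) / (norm \<Delta>)^2)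
      = norm (proj_perp S *v (transpose A *v \<Delta>)) / norm \<Delta>" if "\<Delta> \<noteq> 0" for \<Delta>
    by (simp add: perp_inner real_sqrt_divide)
  have bdd: "bdd_above (insert 0 Q)"
  proof (rule bdd_aboveI[where M = \<sigma>])
    fix x assume "x \<in> insert 0 Q"
    then show "x \<le> \<sigma>"
    proof
      assume "x = 0" then show ?thesis using s0 by simp
    next
      assume "x \<in> Q"
      then obtain \<Delta> where D0: "\<Delta> \<noteq> 0" and x: "x = norm (proj_perp S *v (transpose A *v \<Delta>)) / norm \<Delta>"
        unfolding Q_def using val by auto
      have "norm (proj_perp S *v (transpose A *v \<Delta>)) \<le> \<sigma> * norm \<Delta>"
        using perp_le transpose_norm order_trans unfolding \<sigma>_def by blast
      then show ?thesis using D0 x by (simp add: divide_le_eq)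
    qed
  qed
  have Z0: "Z \<ge> 0" unfolding Zdef by (rule cSup_upper[OF insertI1 bdd])
  have nPw: "norm Pw \<le> Z * norm D"
  proof (cases "D = 0")
    case True then show ?thesis unfolding Pw_def wD by simp
  next
    case False
    have "z1 \<in> fenchel_dom f" unfolding z1_def by (rule grad_dom[OF convex grad])
    then have "norm Pw / norm D \<in> Q" unfolding Q_def Pw_def wD
      using False val[OF False] by (auto simp: D_def image_iff intro!: bexI[of _ z1])
    then have "norm Pw / norm D \<le> Z" unfolding Zdef by (intro cSup_upper bdd) auto
    then show ?thesis using False by (simp add: divide_le_eq mult.commute)
  qed
  have "(norm w)^2 \<le> norm Pw * norm r" using ww wr by (simp add: power2_norm_eq_inner)
  also have "\<dots> \<le> (Z * (2 * L)) * (\<sigma> * L)"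
    using nPw nD nr Z0 L0 by (intro mult_mono order_trans[OF nPw] mult_left_mono) auto
  also have "\<dots> = 2 * (L * L * Z * \<sigma>)" by (simp add: algebra_simps)
  also have "\<dots> \<le> 36 * (L * L * Z * \<sigma>)" using L0 s0 Z0 by simp
  also have "\<dots> = (6 * L * sqrt (\<sigma> * Z))^2"
    by (simp add: power_mult_distrib real_sqrt_pow2[OF mult_nonneg_nonneg[OF s0 Z0]] power2_eq_square algebra_simps)
       (use s0 Z0 in simp)
  finally have nw: "norm w \<le> 6 * L * sqrt (\<sigma> * Z)"
    by (rule power2_le_imp_le) (use L0 s0 Z0 in auto)
  have xsv: "xs = (- (1 / lam)) *\<^sub>R v" using vxs lam_pos
    by (simp add: algebra_simps eq_neg_iff_add_eq_0[symmetric]) 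
  have "(- (1 / lam)) *\<^sub>R u - xs = (- (1 / lam)) *\<^sub>R w"
    unfolding xsv w_def by (simp add: algebra_simps)
  then have "norm ((- (1 / lam)) *\<^sub>R u - xs) = norm w / lam" using lam_pos by simp
  also have "\<dots> \<le> 6 * L * sqrt (\<sigma> * Z) / lam" using nw lam_pos by (simp add: divide_right_mono)
  finally show ?thesis unfolding u_def z1_def \<sigma>_def Z_def z0_def by simp
qed

end
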